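(* Let $G=\langle X\mid\mathcal R\rangle$ be a group, $A,B\le G$ subgroups and $\phi:A\to B$ an isomorphism, and let $H=\langle X\cup\{t\}\mid\mathcal R,\ t^{-1}at=\phi(a)\ (a\in A)\rangle$ be the HNN-extension. Suppose $g_1\in G$ is not a proper power of any element of $G$. Then the image of $g_1$ in $H$ is a proper power in $H$ if and only if there exist $k\ge2$ and $g_2\in G$ such that $g_1$ is conjugate to $g_2^k$ in $H$.
   Context: An element $g$ of a group $K$ is a proper power in $K$ if $g=h^k$ for some $h\in K$ and some integer $k\ge2$. *)

theory Defs
  imports "HOL-Algebra.Algebra"
begin

text \<open>Concrete construction of the HNN-extension
  H = < G, t | t^-1 a t = phi(a) (a in A) > as a quotient of the free monoid on
  letters.  A letter is (Some g, e) for g in G or (None, e) for the stable letter t;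
  the flag e = True means the formal inverse of the letter.  G is presented by its
  multiplication table (equivalent to any presentation of G).\<close>

type_synonym 'g hnn_letter = "'g option \<times> bool"
type_synonym 'g hnn_word = "'g hnn_letter list"

definition hnn_words :: "('g, 'b) monoid_scheme \<Rightarrow> 'g hnn_word set" where
  "hnn_words G = {w. \<forall>l \<in> set w. \<forall>g. fst l = Some g \<longrightarrow> g \<in> carrier G}"

inductive_set hnn_rel :: "('g, 'b) monoid_scheme \<Rightarrow> 'g set \<Rightarrow> ('g \<Rightarrow> 'g)
    \<Rightarrow> ('g hnn_word \<times> 'g hnn_word) set"
  for G :: "('g, 'b) monoid_scheme" and A :: "'g set" and \<phi> :: "'g \<Rightarrow> 'g" where
  refl: "w \<in> hnn_words G \<Longrightarrow> (w, w) \<in> hnn_rel G A \<phi>"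
| sym: "(u, v) \<in> hnn_rel G A \<phi> \<Longrightarrow> (v, u) \<in> hnn_rel G A \<phi>"
| trans: "(u, v) \<in> hnn_rel G A \<phi> \<Longrightarrow> (v, w) \<in> hnn_rel G A \<phi> \<Longrightarrow> (u, w) \<in> hnn_rel G A \<phi>"
| ctxt: "(u, v) \<in> hnn_rel G A \<phi> \<Longrightarrow> x \<in> hnn_words G \<Longrightarrow> y \<in> hnn_words G
          \<Longrightarrow> (x @ u @ y, x @ v @ y) \<in> hnn_rel G A \<phi>"
| free: "[(s, e)] \<in> hnn_words G \<Longrightarrow> ([(s, e), (s, \<not> e)], []) \<in> hnn_rel G A \<phi>"
| gmult: "g \<in> carrier G \<Longrightarrow> h \<in> carrier G
          \<Longrightarrow> ([(Some g, False), (Some h, False)], [(Some (g \<otimes>\<^bsub>G\<^esub> h), False)]) \<in> hnn_rel G A \<phi>"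
| gone: "([(Some \<one>\<^bsub>G\<^esub>, False)], []) \<in> hnn_rel G A \<phi>"
| conj: "a \<in> A \<Longrightarrow> ([(None, True), (Some a, False), (None, False)], [(Some (\<phi> a), False)])
          \<in> hnn_rel G A \<phi>"

definition hnn_ext :: "('g, 'b) monoid_scheme \<Rightarrow> 'g set \<Rightarrow> ('g \<Rightarrow> 'g)
    \<Rightarrow> 'g hnn_word set monoid" where
  "hnn_ext G A \<phi> =
     \<lparr> carrier = hnn_words G // hnn_rel G A \<phi>,
       monoid.mult = (\<lambda>U V. \<Union>u\<in>U. \<Union>v\<in>V. hnn_rel G A \<phi> `` {u @ v}),
       monoid.one = hnn_rel G A \<phi> `` {[]} \<rparr>"

definition hnn_inc :: "('g, 'b) monoid_scheme \<Rightarrow> 'g set \<Rightarrow> ('g \<Rightarrow> 'g) \<Rightarrow> 'g \<Rightarrow> 'g hnn_word set" where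
  "hnn_inc G A \<phi> g = hnn_rel G A \<phi> `` {[(Some g, False)]}"

definition hnn_t :: "('g, 'b) monoid_scheme \<Rightarrow> 'g set \<Rightarrow> ('g \<Rightarrow> 'g) \<Rightarrow> 'g hnn_word set" where
  "hnn_t G A \<phi> = hnn_rel G A \<phi> `` {[(None, False)]}"

definition proper_power :: "('a, 'b) monoid_scheme \<Rightarrow> 'a \<Rightarrow> bool" where
  "proper_power K g \<longleftrightarrow> (\<exists>h\<in>carrier K. \<exists>k::int. k \<ge> 2 \<and> g = h [^]\<^bsub>K\<^esub> k)"

end

theory Submission
  imports Defs
begin

locale hnnctx = group G for G :: "('g, 'b) monoid_scheme" (structure) +
  fixes A B :: "'g set" and \<phi> :: "'g \<Rightarrow> 'g"
  assumes sgA: "subgroup A G" and sgB: "subgroup B G"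
    and phiso: "\<phi> \<in> iso (G\<lparr>carrier := A\<rparr>) (G\<lparr>carrier := B\<rparr>)"
begin

abbreviation R where "R \<equiv> hnn_rel G A \<phi>"
abbreviation W where "W \<equiv> hnn_words G"
abbreviation H where "H \<equiv> hnn_ext G A \<phi>"
definition cls where "cls w = R `` {w}"

lemma words_Cons[simp]: "(l # w \<in> W) = ((\<forall>g. fst l = Some g \<longrightarrow> g \<in> carrier G) \<and> w \<in> W)"
  by (auto simp: hnn_words_def)
lemma words_Nil[simp]: "[] \<in> W" by (auto simp: hnn_words_def)
lemma words_app[simp]: "(u @ v \<in> W) = (u \<in> W \<and> v \<in> W)"
  by (auto simp: hnn_words_def)

lemma A_sub: "A \<subseteq> carrier G" using sgA subgroup.subset by blast
lemma B_sub: "B \<subseteq> carrier G" using sgB subgroup.subset by blast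
lemma phi_hom: "\<phi> \<in> hom (G\<lparr>carrier := A\<rparr>) (G\<lparr>carrier := B\<rparr>)"
  using phiso by (simp add: iso_def)
lemma phi_bij: "bij_betw \<phi> A B"
  using phiso by (simp add: iso_def)
lemma phi_B: "a \<in> A \<Longrightarrow> \<phi> a \<in> B"
  using phi_bij by (auto simp: bij_betw_def)
lemma phi_mult: "a \<in> A \<Longrightarrow> a' \<in> A \<Longrightarrow> \<phi> (a \<otimes> a') = \<phi> a \<otimes> \<phi> a'"
  using phi_hom by (auto simp: hom_def)
lemma phi_carr: "a \<in> A \<Longrightarrow> \<phi> a \<in> carrier G"
  using phi_B B_sub by blast

lemma R_words: "(u, v) \<in> R \<Longrightarrow> u \<in> W \<and> v \<in> W"
  by (induction rule: hnn_rel.induct) (use A_sub phi_carr in auto)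

lemma equivR: "equiv W R"
  unfolding equiv_def refl_on_def sym_def trans_def
  using R_words hnn_rel.refl hnn_rel.sym hnn_rel.trans by (metis subrelI mem_Sigma_iff)


lemma R_ctxt: "(u, v) \<in> R \<Longrightarrow> x \<in> W \<Longrightarrow> y \<in> W \<Longrightarrow> (x @ u @ y, x @ v @ y) \<in> R"
  by (rule hnn_rel.ctxt)

lemma R_app: "(u, u') \<in> R \<Longrightarrow> (v, v') \<in> R \<Longrightarrow> (u @ v, u' @ v') \<in> R"
proof -
  assume a: "(u, u') \<in> R" "(v, v') \<in> R"
  have 1: "([] @ u @ v, [] @ u' @ v) \<in> R"
    using a R_words by (intro R_ctxt) auto
  have 2: "(u' @ v @ [], u' @ v' @ []) \<in> R"
    using a R_words by (intro R_ctxt) auto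
  show ?thesis using hnn_rel.trans[OF 1[simplified] 2[simplified]] by simp
qed

lemma cls_eq: "(u, v) \<in> R \<Longrightarrow> cls u = cls v"
  unfolding cls_def using equivR by (simp add: equiv_class_eq)

lemma cls_eq_iff: "u \<in> W \<Longrightarrow> v \<in> W \<Longrightarrow> cls u = cls v \<longleftrightarrow> (u, v) \<in> R"
  unfolding cls_def using equivR by (simp add: eq_equiv_class_iff)

lemma carrierH: "carrier H = cls ` W"
  by (auto simp: hnn_ext_def quotient_def cls_def)

lemma oneH: "\<one>\<^bsub>H\<^esub> = cls []"
  by (simp add: hnn_ext_def cls_def)

lemma multH: "u \<in> W \<Longrightarrow> v \<in> W \<Longrightarrow> cls u \<otimes>\<^bsub>H\<^esub> cls v = cls (u @ v)"
proof -
  assume u: "u \<in> W" and v: "v \<in> W"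
  have "\<And>u' v'. u' \<in> cls u \<Longrightarrow> v' \<in> cls v \<Longrightarrow> R `` {u' @ v'} = cls (u @ v)"
  proof -
    fix u' v' assume "u' \<in> cls u" "v' \<in> cls v"
    hence "(u, u') \<in> R" "(v, v') \<in> R" by (auto simp: cls_def)
    hence "(u' @ v', u @ v) \<in> R" by (blast intro: R_app hnn_rel.sym)
    thus "R `` {u' @ v'} = cls (u @ v)" using cls_eq by (simp add: cls_def)
  qed
  moreover have "u \<in> cls u" "v \<in> cls v" using u v by (auto simp: cls_def intro: hnn_rel.refl)
  moreover have "cls u \<otimes>\<^bsub>H\<^esub> cls v = (\<Union>u'\<in>cls u. \<Union>v'\<in>cls v. R `` {u' @ v'})"
    by (simp add: hnn_ext_def)
  ultimately have "cls u \<otimes>\<^bsub>H\<^esub> cls v = (\<Union>u'\<in>cls u. \<Union>v'\<in>cls v. cls (u @ v))"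
    by simp
  also have "\<dots> = cls (u @ v)" using \<open>u \<in> cls u\<close> \<open>v \<in> cls v\<close> by blast
  finally show ?thesis .
qed

definition flipw :: "'g hnn_word \<Rightarrow> 'g hnn_word" where
  "flipw w = rev (map (\<lambda>(s, e). (s, \<not> e)) w)"

lemma flipw_words[simp]: "(flipw w \<in> W) = (w \<in> W)"
  by (auto simp: flipw_def hnn_words_def)

lemma flipw_inv: "w \<in> W \<Longrightarrow> (flipw w @ w, []) \<in> R"
proof (induction w)
  case Nil then show ?case by (simp add: flipw_def hnn_rel.refl)
next
  case (Cons l w)
  obtain s e where l: "l = (s, e)" by (cases l)
  have f: "([(s, \<not> e), (s, \<not> \<not> e)], []) \<in> R"
    using Cons.prems l by (intro hnn_rel.free) (auto simp: hnn_words_def)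
  have x: "(flipw w @ [(s, \<not> e), (s, \<not>\<not> e)] @ w, flipw w @ [] @ w) \<in> R"
    using Cons.prems by (intro R_ctxt[OF f]) auto
  have e: "flipw (l # w) @ l # w = flipw w @ [(s, \<not> e), (s, \<not>\<not> e)] @ w"
    by (simp add: flipw_def l)
  have y: "(flipw w @ w, []) \<in> R" using Cons by simp
  have "(flipw w @ [(s, \<not> e), (s, \<not>\<not> e)] @ w, []) \<in> R" using hnn_rel.trans[OF x[simplified] y] by simp
  then show ?case unfolding e .
qed

lemma groupH: "group H"
proof (rule groupI)
  fix x y assume "x \<in> carrier H" "y \<in> carrier H"
  then show "x \<otimes>\<^bsub>H\<^esub> y \<in> carrier H" by (auto simp: carrierH multH)
next
  show "\<one>\<^bsub>H\<^esub> \<in> carrier H" by (auto simp: carrierH oneH)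
next
  fix x y z assume "x \<in> carrier H" "y \<in> carrier H" "z \<in> carrier H"
  then show "x \<otimes>\<^bsub>H\<^esub> y \<otimes>\<^bsub>H\<^esub> z = x \<otimes>\<^bsub>H\<^esub> (y \<otimes>\<^bsub>H\<^esub> z)"
    by (auto simp: carrierH multH)
next
  fix x assume "x \<in> carrier H"
  then show "\<one>\<^bsub>H\<^esub> \<otimes>\<^bsub>H\<^esub> x = x" by (auto simp: carrierH multH oneH)
next
  fix x assume "x \<in> carrier H"
  then obtain w where w: "w \<in> W" "x = cls w" by (auto simp: carrierH)
  then show "\<exists>y\<in>carrier H. y \<otimes>\<^bsub>H\<^esub> x = \<one>\<^bsub>H\<^esub>"
    by (intro bexI[of _ "cls (flipw w)"]) (auto simp: carrierH multH oneH flipw_inv cls_eq)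
qed

lemma invH: "w \<in> W \<Longrightarrow> inv\<^bsub>H\<^esub> (cls w) = cls (flipw w)"
  using group.inv_equality[OF groupH] flipw_inv
  by (metis carrierH cls_eq flipw_words image_eqI multH oneH)

lemma cls_in[simp]: "w \<in> W \<Longrightarrow> cls w \<in> carrier H"
  by (simp add: carrierH)

end

context hnnctx
begin

definition S :: "bool \<Rightarrow> 'g set" where "S e = (if e then A else B)"
definition psi :: "bool \<Rightarrow> 'g \<Rightarrow> 'g" where "psi e = (if e then \<phi> else inv_into A \<phi>)"

lemma sgS: "subgroup (S e) G" using sgA sgB by (simp add: S_def)
lemma S_carr: "s \<in> S e \<Longrightarrow> s \<in> carrier G" using sgS subgroup.subset by blast

lemma psi_in: "s \<in> S e \<Longrightarrow> psi e s \<in> S (\<not> e)"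
  using phi_bij by (cases e) (auto simp: S_def psi_def phi_B bij_betw_def inv_into_into)

lemma psi_psi: "s \<in> S e \<Longrightarrow> psi (\<not> e) (psi e s) = s"
  using phi_bij by (cases e)
    (auto simp: S_def psi_def bij_betw_def inv_into_f_f f_inv_into_f)

lemma psi_carr: "s \<in> S e \<Longrightarrow> psi e s \<in> carrier G"
  using psi_in S_carr by blast

lemma psi_mult: "s \<in> S e \<Longrightarrow> s' \<in> S e \<Longrightarrow> psi e (s \<otimes> s') = psi e s \<otimes> psi e s'"
proof (cases e)
  case True
  then show "s \<in> S e \<Longrightarrow> s' \<in> S e \<Longrightarrow> ?thesis" unfolding S_def psi_def using phi_mult by simp
next
  case False
  assume s: "s \<in> S e" and s': "s' \<in> S e"
  define a where "a = inv_into A \<phi> s"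
  define a' where "a' = inv_into A \<phi> s'"
  have sB: "s \<in> B" "s' \<in> B" using s s' False by (auto simp: S_def)
  have im: "\<phi> ` A = B" using phi_bij by (simp add: bij_betw_def)
  have inj: "inj_on \<phi> A" using phi_bij by (simp add: bij_betw_def)
  have a: "a \<in> A" "a' \<in> A" unfolding a_def a'_def using sB im by (metis inv_into_into)+
  have fa: "\<phi> a = s" "\<phi> a' = s'" unfolding a_def a'_def using sB im by (metis f_inv_into_f)+
  have e1: "\<phi> (a \<otimes> a') = s \<otimes> s'" using phi_mult[OF a] fa by simp
  have e2: "a \<otimes> a' \<in> A" using subgroup.m_closed[OF sgA a] by simp
  have "inv_into A \<phi> (s \<otimes> s') = a \<otimes> a'"
    using inv_into_f_f[OF inj e2] unfolding e1 .
  then show ?thesis using False by (simp add: psi_def a_def a'_def)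
qed

definition rep :: "'g set \<Rightarrow> 'g \<Rightarrow> 'g" where
  "rep T g = (SOME c. c \<in> carrier G \<and> g \<otimes> inv c \<in> T \<and> (g \<in> T \<longrightarrow> c = \<one>))"

lemma rep_props:
  assumes T: "subgroup T G" and g: "g \<in> carrier G"
  shows "rep T g \<in> carrier G \<and> g \<otimes> inv (rep T g) \<in> T \<and> (g \<in> T \<longrightarrow> rep T g = \<one>)"
proof -
  have "\<exists>c. c \<in> carrier G \<and> g \<otimes> inv c \<in> T \<and> (g \<in> T \<longrightarrow> c = \<one>)"
  proof (cases "g \<in> T")
    case True then show ?thesis by (intro exI[of _ \<one>]) (simp add: g)
  next
    case False then show ?thesis using g T
      by (intro exI[of _ g]) (simp add: subgroup.one_closed)
  qed
  then show ?thesis unfolding rep_def by (rule someI_ex)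
qed

lemma rep_eq:
  assumes T: "subgroup T G" and g: "g \<in> carrier G" and g': "g' \<in> carrier G"
    and d: "g' \<otimes> inv g \<in> T"
  shows "rep T g' = rep T g"
proof -
  have tc: "T \<subseteq> carrier G" using T subgroup.subset by blast
  have 1: "\<And>c. c \<in> carrier G \<Longrightarrow> (g' \<otimes> inv c \<in> T) = (g \<otimes> inv c \<in> T)"
  proof -
    fix c assume c: "c \<in> carrier G"
    have e: "g' \<otimes> inv c = (g' \<otimes> inv g) \<otimes> (g \<otimes> inv c)"
      using g g' c by (simp add: m_assoc[symmetric]) (simp add: m_assoc)
    have e2: "g \<otimes> inv c = inv (g' \<otimes> inv g) \<otimes> (g' \<otimes> inv c)"
      using g g' c by (simp add: inv_mult_group m_assoc[symmetric]) (simp add: m_assoc)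
    have i: "inv (g' \<otimes> inv g) \<in> T" by (rule subgroup.m_inv_closed[OF T d])
    show "(g' \<otimes> inv c \<in> T) = (g \<otimes> inv c \<in> T)"
    proof
      assume "g' \<otimes> inv c \<in> T"
      then show "g \<otimes> inv c \<in> T" by (subst e2) (rule subgroup.m_closed[OF T i])
    next
      assume "g \<otimes> inv c \<in> T"
      then show "g' \<otimes> inv c \<in> T" by (subst e) (rule subgroup.m_closed[OF T d])
    qed
  qed
  have 2: "(g' \<in> T) = (g \<in> T)"
  proof -
    have e: "g' = (g' \<otimes> inv g) \<otimes> g" using g g' by (simp add: m_assoc)
    have e2: "g = inv (g' \<otimes> inv g) \<otimes> g'" using g g'
      by (simp add: inv_mult_group m_assoc)
    have i: "inv (g' \<otimes> inv g) \<in> T" by (rule subgroup.m_inv_closed[OF T d])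
    show ?thesis
    proof
      assume "g' \<in> T"
      then show "g \<in> T" by (subst e2) (rule subgroup.m_closed[OF T i])
    next
      assume "g \<in> T"
      then show "g' \<in> T" by (subst e) (rule subgroup.m_closed[OF T d])
    qed
  qed
  have "(\<lambda>c. c \<in> carrier G \<and> g' \<otimes> inv c \<in> T \<and> (g' \<in> T \<longrightarrow> c = \<one>))
      = (\<lambda>c. c \<in> carrier G \<and> g \<otimes> inv c \<in> T \<and> (g \<in> T \<longrightarrow> c = \<one>))"
    using 1 2 by (intro ext) blast
  then show ?thesis unfolding rep_def by simp
qed

lemma rep_one_iff:
  assumes T: "subgroup T G" and g: "g \<in> carrier G"
  shows "(rep T g = \<one>) = (g \<in> T)"
  using rep_props[OF T g] g by auto

lemma rep_rep:
  assumes T: "subgroup T G" and g: "g \<in> carrier G"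
  shows "rep T (rep T g) = rep T g"
proof -
  have p: "rep T g \<in> carrier G" "g \<otimes> inv (rep T g) \<in> T" using rep_props[OF T g] by auto
  have "rep T g \<otimes> inv g = inv (g \<otimes> inv (rep T g))" using p g by (simp add: inv_mult_group)
  then have "rep T g \<otimes> inv g \<in> T" using subgroup.m_inv_closed[OF T p(2)] by simp
  then show ?thesis using rep_eq[OF T g p(1)] by simp
qed

lemma rep_left:
  assumes T: "subgroup T G" and g: "g \<in> carrier G" and s: "s \<in> T"
  shows "rep T (s \<otimes> g) = rep T g"
proof -
  have sc: "s \<in> carrier G" using s T subgroup.subset by blast
  have "(s \<otimes> g) \<otimes> inv g = s" using sc g by (simp add: m_assoc)
  then show ?thesis using rep_eq[OF T g] sc g s by simp
qed

type_synonym 'h nform = "'h \<times> (bool \<times> 'h) list"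

fun nfL :: "(bool \<times> 'g) list \<Rightarrow> bool" where
  "nfL [] = True"
| "nfL ((e, c) # L) = (c \<in> carrier G \<and> rep (S e) c = c \<and> (L \<noteq> [] \<longrightarrow> fst (hd L) \<noteq> e \<longrightarrow> c \<noteq> \<one>) \<and> nfL L)"

definition isNF :: "'g nform \<Rightarrow> bool" where
  "isNF x = (fst x \<in> carrier G \<and> nfL (snd x))"

definition nf1 :: "'g nform" where "nf1 = (\<one>, [])"

definition actt :: "bool \<Rightarrow> 'g nform \<Rightarrow> 'g nform" where
  "actt e x = (let c = rep (S e) (fst x); s = fst x \<otimes> inv c in
     if c = \<one> \<and> snd x \<noteq> [] \<and> fst (hd (snd x)) = (\<not> e)
     then (psi e s \<otimes> snd (hd (snd x)), tl (snd x))
     else (psi e s, (e, c) # snd x))"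

definition actg :: "'g \<Rightarrow> 'g nform \<Rightarrow> 'g nform" where
  "actg g x = (g \<otimes> fst x, snd x)"

fun actl :: "'g hnn_letter \<Rightarrow> 'g nform \<Rightarrow> 'g nform" where
  "actl (Some g, False) = actg g"
| "actl (Some g, True) = actg (inv g)"
| "actl (None, e) = actt e"

fun actw :: "'g hnn_word \<Rightarrow> 'g nform \<Rightarrow> 'g nform" where
  "actw [] x = x"
| "actw (l # w) x = actl l (actw w x)"

lemma actw_app: "actw (u @ v) x = actw u (actw v x)"
  by (induction u) auto

lemma nf1_NF: "isNF nf1" by (simp add: isNF_def nf1_def)

lemma s_in:
  assumes g: "g \<in> carrier G"
  shows "g \<otimes> inv (rep (S e) g) \<in> S e" "rep (S e) g \<in> carrier G"
  using rep_props[OF sgS g] by auto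

lemma actt_simp:
  assumes "c = rep (S e) g0" "s = g0 \<otimes> inv c"
  shows "actt e (g0, L) = (if c = \<one> \<and> L \<noteq> [] \<and> fst (hd L) = (\<not> e)
     then (psi e s \<otimes> snd (hd L), tl L) else (psi e s, (e, c) # L))"
  unfolding actt_def Let_def using assms by simp

lemma actt_NF:
  assumes x: "isNF x" shows "isNF (actt e x)"
proof -
  obtain g0 L where xe: "x = (g0, L)" by (cases x)
  have g0: "g0 \<in> carrier G" and L: "nfL L" using x xe by (auto simp: isNF_def)
  define c where "c = rep (S e) g0"
  define s where "s = g0 \<otimes> inv c"
  have sS: "s \<in> S e" and cc: "c \<in> carrier G" using s_in[OF g0] by (auto simp: s_def c_def)
  have ps: "psi e s \<in> carrier G" using psi_carr[OF sS] .
  show ?thesis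
  proof (cases "c = \<one> \<and> L \<noteq> [] \<and> fst (hd L) = (\<not> e)")
    case True
    then obtain c1 L' where L1: "L = (\<not> e, c1) # L'" by (cases L) auto
    have "c1 \<in> carrier G" "nfL L'" using L L1 by auto
    have "actt e x = (psi e s \<otimes> snd (hd L), tl L)"
      by (simp only: xe actt_simp[OF c_def s_def] if_P[OF True])
    then show ?thesis using True ps \<open>c1 \<in> carrier G\<close> \<open>nfL L'\<close> by (simp add: L1 isNF_def)
  next
    case False
    have rr: "rep (S e) c = c" using rep_rep[OF sgS g0] by (simp add: c_def)
    have "isNF (psi e s, (e, c) # L)"
      using False ps cc rr L by (cases L) (auto simp: isNF_def)
    moreover have "actt e x = (psi e s, (e, c) # L)"
      by (simp only: xe actt_simp[OF c_def s_def] if_not_P[OF False])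
    ultimately show ?thesis by simp
  qed
qed

lemma actg_NF: "isNF x \<Longrightarrow> g \<in> carrier G \<Longrightarrow> isNF (actg g x)"
  by (simp add: isNF_def actg_def)

lemma actl_NF: "isNF x \<Longrightarrow> [l] \<in> W \<Longrightarrow> isNF (actl l x)"
  by (cases l rule: actl.cases) (auto simp: actg_NF actt_NF)

lemma actw_NF: "isNF x \<Longrightarrow> w \<in> W \<Longrightarrow> isNF (actw w x)"
proof (induction w)
  case (Cons l w) then show ?case
    using actl_NF[of "actw w x" l] by (cases l) auto
qed simp

lemma actt_inv:
  assumes x: "isNF x" shows "actt (\<not> e) (actt e x) = x"
proof -
  obtain g0 L where xe: "x = (g0, L)" by (cases x)
  have g0: "g0 \<in> carrier G" and L: "nfL L" using x xe by (auto simp: isNF_def)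
  define c where "c = rep (S e) g0"
  define s where "s = g0 \<otimes> inv c"
  have sS: "s \<in> S e" and cc: "c \<in> carrier G" using s_in[OF g0] by (auto simp: s_def c_def)
  have ps: "psi e s \<in> S (\<not> e)" using psi_in[OF sS] .
  have psc: "psi e s \<in> carrier G" using ps S_carr by blast
  have g0e: "g0 = s \<otimes> c" using g0 cc by (simp add: s_def m_assoc)
  show ?thesis
  proof (cases "c = \<one> \<and> L \<noteq> [] \<and> fst (hd L) = (\<not> e)")
    case True
    then obtain c1 L' where L1: "L = (\<not> e, c1) # L'" by (cases L) auto
    have c1: "c1 \<in> carrier G" "rep (S (\<not> e)) c1 = c1" "L' \<noteq> [] \<longrightarrow> fst (hd L') = e \<longrightarrow> c1 \<noteq> \<one>"
      using L L1 by auto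
    have a1: "actt e x = (psi e s \<otimes> c1, L')"
      by (simp only: xe actt_simp[OF c_def s_def] if_P[OF True]) (simp add: L1)
    have r: "rep (S (\<not> e)) (psi e s \<otimes> c1) = c1"
      using rep_left[OF sgS c1(1) ps] c1 by simp
    have s2: "(psi e s \<otimes> c1) \<otimes> inv c1 = psi e s" using psc c1 by (simp add: m_assoc)
    have ss: "s = g0" using True by (simp add: s_def g0)
    show ?thesis
    proof (cases "c1 = \<one> \<and> L' \<noteq> [] \<and> fst (hd L') = (\<not> \<not> e)")
      case True2: True
      then show ?thesis using c1 by auto
    next
      case False2: False
      have "actt (\<not> e) (psi e s \<otimes> c1, L') = (psi (\<not> e) (psi e s), (\<not> e, c1) # L')"
        by (simp only: actt_simp[OF r[symmetric] s2[symmetric]] if_not_P[OF False2])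
      then show ?thesis using a1 psi_psi[OF sS] ss by (simp add: xe L1)
    qed
  next
    case False
    have a1: "actt e x = (psi e s, (e, c) # L)"
      by (simp only: xe actt_simp[OF c_def s_def] if_not_P[OF False])
    have r: "rep (S (\<not> e)) (psi e s) = \<one>" using rep_one_iff[OF sgS psc] ps by simp
    have "actt (\<not> e) (psi e s, (e, c) # L) = (psi (\<not> e) (psi e s) \<otimes> c, L)"
      unfolding actt_def using psc by (simp add: Let_def r)
    then show ?thesis using a1 psi_psi[OF sS] g0e by (simp add: xe)
  qed
qed

lemma comm_act:
  assumes x: "isNF x" and a: "a \<in> A"
  shows "actg a (actt False x) = actt False (actg (\<phi> a) x)"
proof -
  obtain g0 L where xe: "x = (g0, L)" by (cases x)
  have g0: "g0 \<in> carrier G" and L: "nfL L" using x xe by (auto simp: isNF_def)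
  have pa: "\<phi> a \<in> S False" using phi_B a by (simp add: S_def)
  have pac: "\<phi> a \<in> carrier G" using phi_carr a by blast
  have ac: "a \<in> carrier G" using a A_sub by blast
  define c where "c = rep (S False) g0"
  define s where "s = g0 \<otimes> inv c"
  have sS: "s \<in> S False" and cc: "c \<in> carrier G" using s_in[OF g0] by (auto simp: s_def c_def)
  have rc: "rep (S False) (\<phi> a \<otimes> g0) = c" using rep_left[OF sgS g0 pa] by (simp add: c_def)
  have s': "(\<phi> a \<otimes> g0) \<otimes> inv c = \<phi> a \<otimes> s" using pac g0 cc by (simp add: s_def m_assoc)
  have pp: "psi False (\<phi> a \<otimes> s) = a \<otimes> psi False s"
  proof -
    have "psi False (\<phi> a) = a" using psi_psi[of a True] a by (simp add: S_def psi_def)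
    then show ?thesis using psi_mult[OF pa sS] by simp
  qed
  have psc: "psi False s \<in> carrier G" using psi_carr[OF sS] .
  have l: "actt False (g0, L) = (if c = \<one> \<and> L \<noteq> [] \<and> fst (hd L) = (\<not> False)
     then (psi False s \<otimes> snd (hd L), tl L) else (psi False s, (False, c) # L))"
    by (rule actt_simp[OF c_def s_def])
  have r: "actt False (\<phi> a \<otimes> g0, L) = (if c = \<one> \<and> L \<noteq> [] \<and> fst (hd L) = (\<not> False)
     then (psi False (\<phi> a \<otimes> s) \<otimes> snd (hd L), tl L) else (psi False (\<phi> a \<otimes> s), (False, c) # L))"
    by (rule actt_simp[OF rc[symmetric] s'[symmetric]])
  have hc: "L \<noteq> [] \<Longrightarrow> snd (hd L) \<in> carrier G" using L by (cases L) auto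
  show ?thesis
    unfolding actg_def xe fst_conv snd_conv l r pp using ac psc hc
    by (auto simp: m_assoc)
qed

lemma act_R:
  assumes "(u, v) \<in> R" shows "\<forall>x. isNF x \<longrightarrow> actw u x = actw v x"
  using assms
proof (induction rule: hnn_rel.induct)
  case (ctxt u v x y)
  show ?case
  proof (intro allI impI)
    fix z :: "'g nform" assume z: "isNF z"
    have "isNF (actw y z)" using actw_NF[OF z ctxt(3)] .
    then have "actw u (actw y z) = actw v (actw y z)" using ctxt(4) by (cases "actw y z") simp
    then show "actw (x @ u @ y) z = actw (x @ v @ y) z" by (simp add: actw_app)
  qed
next
  case (sym u v) then show ?case by simp
next
  case (trans u v w) then show ?case by simp
next
  case (refl w) then show ?case by simp
next
  case (free s e)
  show ?case
  proof (intro allI impI)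
    fix x :: "'g nform" assume x: "isNF x"
    show "actw [(s, e), (s, \<not> e)] x = actw [] x"
    proof (cases s)
      case None
      then show ?thesis using actt_inv[OF x, of "\<not> e"] by simp
    next
      case (Some g)
      then have g: "g \<in> carrier G" using free by auto
      have "fst x \<in> carrier G" using x by (simp add: isNF_def)
      then show ?thesis using Some g
        by (cases e) (simp_all add: actg_def m_assoc[symmetric])
    qed
  qed
next
  case (gmult g h)
  then show ?case by (auto simp: actg_def isNF_def m_assoc)
next
  case gone
  then show ?case by (auto simp: actg_def isNF_def)
next
  case (conj a)
  show ?case
  proof (intro allI impI)
    fix x :: "'g nform" assume x: "isNF x"
    have pac: "\<phi> a \<in> carrier G" using phi_carr conj by blast
    have "actw [(None, True), (Some a, False), (None, False)] x
        = actt True (actg a (actt False x))" by simp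
    also have "\<dots> = actt True (actt False (actg (\<phi> a) x))" using comm_act[OF x conj] by simp
    also have "\<dots> = actg (\<phi> a) x" using actt_inv[OF actg_NF[OF x pac], of False] by simp
    finally show "actw [(None, True), (Some a, False), (None, False)] x = actw [(Some (\<phi> a), False)] x"
      by simp
  qed
qed

end

sublocale hnnctx \<subseteq> Hg: group "hnn_ext G A \<phi>" by (rule groupH)

context hnnctx
begin

definition inc :: "'g \<Rightarrow> 'g hnn_word set" where "inc g = cls [(Some g, False)]"
definition tt :: "bool \<Rightarrow> 'g hnn_word set" where "tt e = cls [(None, e)]"

fun sylls :: "(bool \<times> 'g) list \<Rightarrow> 'g hnn_word" where
  "sylls [] = []"
| "sylls ((e, g) # L) = (None, e) # (Some g, False) # sylls L"

definition tw :: "'g nform \<Rightarrow> 'g hnn_word" where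
  "tw x = (Some (fst x), False) # sylls (snd x)"

lemma sylls_app: "sylls (L1 @ L2) = sylls L1 @ sylls L2"
  by (induction L1 rule: sylls.induct) auto

definition carrL :: "(bool \<times> 'g) list \<Rightarrow> bool" where
  "carrL L = (\<forall>p \<in> set L. snd p \<in> carrier G)"

lemma sylls_W: "carrL L \<Longrightarrow> sylls L \<in> W"
  by (induction L rule: sylls.induct) (auto simp: carrL_def)

lemma nfL_carrL: "nfL L \<Longrightarrow> carrL L"
  by (induction L rule: nfL.induct) (auto simp: carrL_def)

lemma tw_W: "g0 \<in> carrier G \<Longrightarrow> carrL L \<Longrightarrow> tw (g0, L) \<in> W"
  by (simp add: tw_def sylls_W)

lemma tw_W': "isNF x \<Longrightarrow> tw x \<in> W"
  by (cases x) (simp add: isNF_def tw_W nfL_carrL)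

lemma inc_carr[simp]: "g \<in> carrier G \<Longrightarrow> inc g \<in> carrier H"
  by (simp add: inc_def)
lemma tt_carr[simp]: "tt e \<in> carrier H"
  by (simp add: tt_def)

lemma cls_Cons: "l # w \<in> W \<Longrightarrow> cls (l # w) = cls [l] \<otimes>\<^bsub>H\<^esub> cls w"
  using multH[of "[l]" w] by simp

lemma cls_app: "u \<in> W \<Longrightarrow> v \<in> W \<Longrightarrow> cls (u @ v) = cls u \<otimes>\<^bsub>H\<^esub> cls v"
  using multH by simp

lemma cls_tw: "g0 \<in> carrier G \<Longrightarrow> carrL L \<Longrightarrow> cls (tw (g0, L)) = inc g0 \<otimes>\<^bsub>H\<^esub> cls (sylls L)"
  using cls_Cons[of "(Some g0, False)" "sylls L"] by (simp add: tw_def inc_def sylls_W)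

lemma cls_sylls_Cons: "g \<in> carrier G \<Longrightarrow> carrL L \<Longrightarrow>
    cls (sylls ((e, g) # L)) = tt e \<otimes>\<^bsub>H\<^esub> inc g \<otimes>\<^bsub>H\<^esub> cls (sylls L)"
proof -
  assume g: "g \<in> carrier G" and L: "carrL L"
  have "cls (sylls ((e, g) # L)) = tt e \<otimes>\<^bsub>H\<^esub> cls ((Some g, False) # sylls L)"
    using cls_Cons[of "(None, e)" "(Some g, False) # sylls L"] g L sylls_W by (simp add: tt_def)
  also have "\<dots> = tt e \<otimes>\<^bsub>H\<^esub> (inc g \<otimes>\<^bsub>H\<^esub> cls (sylls L))"
    using cls_Cons[of "(Some g, False)" "sylls L"] g L sylls_W by (simp add: inc_def)
  finally show ?thesis using g L sylls_W by (simp add: Hg.m_assoc)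
qed

lemma cls_sylls_carr[simp]: "carrL L \<Longrightarrow> cls (sylls L) \<in> carrier H"
  using sylls_W by simp

lemma inc_mult: "g \<in> carrier G \<Longrightarrow> h \<in> carrier G \<Longrightarrow> inc (g \<otimes> h) = inc g \<otimes>\<^bsub>H\<^esub> inc h"
proof -
  assume g: "g \<in> carrier G" and h: "h \<in> carrier G"
  have "cls [(Some g, False), (Some h, False)] = inc (g \<otimes> h)"
    unfolding inc_def by (rule cls_eq) (rule hnn_rel.gmult[OF g h])
  moreover have "cls [(Some g, False), (Some h, False)] = inc g \<otimes>\<^bsub>H\<^esub> inc h"
    using multH[of "[(Some g, False)]" "[(Some h, False)]"] g h by (simp add: inc_def)
  ultimately show ?thesis by simp
qed

lemma inc_one: "inc \<one> = \<one>\<^bsub>H\<^esub>"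
  unfolding inc_def oneH by (rule cls_eq) (rule hnn_rel.gone)

lemma inc_inv: "g \<in> carrier G \<Longrightarrow> inc (inv g) = inv\<^bsub>H\<^esub> (inc g)"
proof -
  assume g: "g \<in> carrier G"
  have "inc (inv g) \<otimes>\<^bsub>H\<^esub> inc g = \<one>\<^bsub>H\<^esub>"
    using inc_mult[of "inv g" g] g by (simp add: inc_one)
  then show ?thesis using g by (simp add: Hg.inv_equality)
qed

lemma letter_inv: "g \<in> carrier G \<Longrightarrow> cls [(Some g, True)] = inv\<^bsub>H\<^esub> (inc g)"
  using invH[of "[(Some g, False)]"] by (simp add: inc_def flipw_def)

lemma tt_inv: "tt (\<not> e) = inv\<^bsub>H\<^esub> (tt e)"
  using invH[of "[(None, e)]"] by (simp add: tt_def flipw_def)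

lemma tt_inv': "inv\<^bsub>H\<^esub> (tt (\<not> e)) = tt e"
  using tt_inv[of "\<not> e"] by simp

lemma pinchH:
  assumes s: "s \<in> S e"
  shows "tt e \<otimes>\<^bsub>H\<^esub> inc s \<otimes>\<^bsub>H\<^esub> tt (\<not> e) = inc (psi e s)"
proof (cases e)
  case True
  have sA: "s \<in> A" using s True by (simp add: S_def)
  have sc: "s \<in> carrier G" using sA A_sub by blast
  have "cls [(None, True), (Some s, False), (None, False)] = inc (\<phi> s)"
    unfolding inc_def by (rule cls_eq) (rule hnn_rel.conj[OF sA])
  moreover have "cls [(None, True), (Some s, False), (None, False)]
      = tt True \<otimes>\<^bsub>H\<^esub> inc s \<otimes>\<^bsub>H\<^esub> tt False"
    using cls_Cons[of "(None, True)" "[(Some s, False), (None, False)]"]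
      cls_Cons[of "(Some s, False)" "[(None, False)]"] sc
    by (simp add: tt_def inc_def Hg.m_assoc)
  ultimately show ?thesis using True by (simp add: psi_def)
next
  case False
  define a where "a = psi False s"
  have a: "a \<in> A" using psi_in[OF s] False by (simp add: a_def S_def)
  have ac: "a \<in> carrier G" using a A_sub by blast
  have pa: "psi True a = s" using psi_psi[OF s] False by (simp add: a_def)
  have sc: "s \<in> carrier G" using S_carr[OF s] .
  have c: "tt True \<otimes>\<^bsub>H\<^esub> inc a \<otimes>\<^bsub>H\<^esub> tt False = inc s"
  proof -
    have "cls [(None, True), (Some a, False), (None, False)] = inc (\<phi> a)"
      unfolding inc_def by (rule cls_eq) (rule hnn_rel.conj[OF a])
    moreover have "cls [(None, True), (Some a, False), (None, False)]
        = tt True \<otimes>\<^bsub>H\<^esub> inc a \<otimes>\<^bsub>H\<^esub> tt False"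
      using cls_Cons[of "(None, True)" "[(Some a, False), (None, False)]"]
        cls_Cons[of "(Some a, False)" "[(None, False)]"] ac
      by (simp add: tt_def inc_def Hg.m_assoc)
    ultimately show ?thesis using pa by (simp add: psi_def)
  qed
  have tF: "tt True = inv\<^bsub>H\<^esub> (tt False)" using tt_inv[of False] by simp
  have "tt False \<otimes>\<^bsub>H\<^esub> inc s \<otimes>\<^bsub>H\<^esub> tt True
      = tt False \<otimes>\<^bsub>H\<^esub> (tt True \<otimes>\<^bsub>H\<^esub> inc a \<otimes>\<^bsub>H\<^esub> tt False) \<otimes>\<^bsub>H\<^esub> tt True"
    using c by simp
  also have "\<dots> = inc a"
    using ac by (simp add: tF Hg.m_assoc[symmetric]) (simp add: Hg.m_assoc)
  finally show ?thesis using False by (simp add: a_def)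
qed

lemma commH:
  assumes s: "s \<in> S e"
  shows "inc (psi e s) \<otimes>\<^bsub>H\<^esub> tt e = tt e \<otimes>\<^bsub>H\<^esub> inc s"
proof -
  have sc: "s \<in> carrier G" using S_carr[OF s] .
  have "inc (psi e s) \<otimes>\<^bsub>H\<^esub> tt e = tt e \<otimes>\<^bsub>H\<^esub> inc s \<otimes>\<^bsub>H\<^esub> tt (\<not> e) \<otimes>\<^bsub>H\<^esub> tt e"
    using pinchH[OF s] by simp
  also have "\<dots> = tt e \<otimes>\<^bsub>H\<^esub> inc s"
    using sc by (simp add: tt_inv Hg.m_assoc)
  finally show ?thesis .
qed

end

context hnnctx
begin

lemma isNF_D: "isNF (g0, L) \<Longrightarrow> g0 \<in> carrier G \<and> carrL L \<and> nfL L"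
  by (simp add: isNF_def nfL_carrL)

lemma eval_letter:
  assumes x: "isNF x" and l: "[l] \<in> W"
  shows "cls (tw (actl l x)) = cls [l] \<otimes>\<^bsub>H\<^esub> cls (tw x)"
proof -
  obtain g0 L where xe: "x = (g0, L)" by (cases x)
  have g0: "g0 \<in> carrier G" and L: "carrL L" "nfL L" using isNF_D x xe by auto
  let ?Y = "cls (sylls L)"
  have Yc: "?Y \<in> carrier H" using L by simp
  show ?thesis
  proof (cases l rule: actl.cases)
    case (1 g)
    then have g: "g \<in> carrier G" using l by simp
    show ?thesis using g g0 L 1
      by (simp add: xe actg_def cls_tw inc_mult Hg.m_assoc inc_def[symmetric])
  next
    case (2 g)
    then have g: "g \<in> carrier G" using l by simp
    show ?thesis using g g0 L 2
      by (simp add: xe actg_def cls_tw inc_mult Hg.m_assoc letter_inv inc_inv)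
  next
    case (3 e)
    define c where "c = rep (S e) g0"
    define s where "s = g0 \<otimes> inv c"
    have sS: "s \<in> S e" and cc: "c \<in> carrier G" using s_in[OF g0] by (auto simp: s_def c_def)
    have sc: "s \<in> carrier G" using S_carr[OF sS] .
    have psc: "psi e s \<in> carrier G" using psi_carr[OF sS] .
    have g0e: "g0 = s \<otimes> c" using g0 cc by (simp add: s_def m_assoc)
    have lt: "cls [l] = tt e" using 3 by (simp add: tt_def)
    show ?thesis
    proof (cases "c = \<one> \<and> L \<noteq> [] \<and> fst (hd L) = (\<not> e)")
      case True
      then obtain c1 L' where L1: "L = (\<not> e, c1) # L'" by (cases L) auto
      have c1: "c1 \<in> carrier G" "carrL L'" using L L1 by (auto simp: carrL_def)
      have a1: "actl l x = (psi e s \<otimes> c1, L')" using 3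
        by (simp only: actl.simps xe actt_simp[OF c_def s_def] if_P[OF True]) (simp add: L1)
      have ss: "s = g0" using True by (simp add: s_def g0)
      have "cls (tw (actl l x)) = inc (psi e s) \<otimes>\<^bsub>H\<^esub> inc c1 \<otimes>\<^bsub>H\<^esub> cls (sylls L')"
        using a1 c1 psc by (simp add: cls_tw inc_mult)
      also have "\<dots> = tt e \<otimes>\<^bsub>H\<^esub> inc s \<otimes>\<^bsub>H\<^esub> tt (\<not> e) \<otimes>\<^bsub>H\<^esub> inc c1 \<otimes>\<^bsub>H\<^esub> cls (sylls L')"
        using pinchH[OF sS] by simp
      also have "\<dots> = tt e \<otimes>\<^bsub>H\<^esub> cls (tw x)"
        using c1 sc ss g0 L(1) by (simp add: xe L1 cls_tw cls_sylls_Cons Hg.m_assoc del: sylls.simps)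
      finally show ?thesis using lt by simp
    next
      case False
      have a1: "actl l x = (psi e s, (e, c) # L)" using 3
        by (simp only: actl.simps xe actt_simp[OF c_def s_def] if_not_P[OF False])
      have "cls (tw (actl l x)) = inc (psi e s) \<otimes>\<^bsub>H\<^esub> tt e \<otimes>\<^bsub>H\<^esub> inc c \<otimes>\<^bsub>H\<^esub> ?Y"
      proof -
        have cL: "carrL ((e, c) # L)" using cc L by (simp add: carrL_def)
        show ?thesis using a1 cc psc L cL by (simp add: cls_tw cls_sylls_Cons Hg.m_assoc del: sylls.simps)
      qed
      also have "\<dots> = tt e \<otimes>\<^bsub>H\<^esub> inc s \<otimes>\<^bsub>H\<^esub> inc c \<otimes>\<^bsub>H\<^esub> ?Y"
        using commH[OF sS] by simp
      also have "\<dots> = tt e \<otimes>\<^bsub>H\<^esub> cls (tw x)"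
        using sc cc L g0 by (simp add: xe cls_tw g0e inc_mult Hg.m_assoc)
      finally show ?thesis using lt by simp
    qed
  qed
qed

lemma eval_word:
  assumes x: "isNF x" and w: "w \<in> W"
  shows "cls (tw (actw w x)) = cls w \<otimes>\<^bsub>H\<^esub> cls (tw x)"
  using w
proof (induction w)
  case Nil
  then show ?case using tw_W'[OF x] by (simp add: oneH[symmetric])
next
  case (Cons l w)
  have lW: "[l] \<in> W" using Cons.prems by (cases l) auto
  have wW: "w \<in> W" using Cons.prems by (cases l) auto
  have "cls (tw (actw (l # w) x)) = cls [l] \<otimes>\<^bsub>H\<^esub> cls (tw (actw w x))"
    using eval_letter[OF actw_NF[OF x wW] lW] by simp
  also have "\<dots> = cls [l] \<otimes>\<^bsub>H\<^esub> (cls w \<otimes>\<^bsub>H\<^esub> cls (tw x))" using Cons.IH wW by simp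
  also have "\<dots> = cls (l # w) \<otimes>\<^bsub>H\<^esub> cls (tw x)"
    using cls_Cons[OF Cons.prems] lW wW tw_W'[OF x] by (simp add: Hg.m_assoc)
  finally show ?case .
qed

lemma tw_nf1: "cls (tw nf1) = \<one>\<^bsub>H\<^esub>"
  using cls_tw[of \<one> "[]"] by (simp add: nf1_def carrL_def inc_one oneH[symmetric])

lemma eval_nf: "w \<in> W \<Longrightarrow> cls (tw (actw w nf1)) = cls w"
  using eval_word[OF nf1_NF] tw_nf1 by simp

definition tcount :: "'g hnn_word \<Rightarrow> nat" where
  "tcount w = length (filter (\<lambda>l. fst l = None) w)"

lemma len_actt: "length (snd (actt e x)) \<le> Suc (length (snd x))"
  by (auto simp: actt_def Let_def)

lemma len_actw: "length (snd (actw w x)) \<le> tcount w + length (snd x)"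
proof (induction w)
  case Nil then show ?case by (simp add: tcount_def)
next
  case (Cons l w)
  then show ?case
    by (cases l rule: actl.cases) (auto simp: tcount_def actg_def intro: le_trans[OF len_actt])
qed

lemma tcount_sylls: "tcount (sylls L) = length L"
  by (induction L rule: sylls.induct) (auto simp: tcount_def)

lemma tcount_tw: "tcount (tw x) = length (snd x)"
  using tcount_sylls by (simp add: tw_def tcount_def)

lemma tcount_flipw: "tcount (flipw w) = tcount w"
proof -
  have "length (filter (\<lambda>l. fst l = None) (map (\<lambda>(s, e). (s, \<not> e)) w)) = tcount w"
    by (induction w) (auto simp: tcount_def)
  then show ?thesis by (simp add: flipw_def tcount_def rev_filter[symmetric])
qed

lemma tcount_app: "tcount (u @ v) = tcount u + tcount v"
  by (simp add: tcount_def)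

definition lenH :: "'g hnn_word set \<Rightarrow> nat" where
  "lenH h = length (snd (actw (SOME w. w \<in> W \<and> cls w = h) nf1))"

lemma lenH_cls: "w \<in> W \<Longrightarrow> lenH (cls w) = length (snd (actw w nf1))"
proof -
  assume w: "w \<in> W"
  let ?w = "SOME w'. w' \<in> W \<and> cls w' = cls w"
  have "?w \<in> W \<and> cls ?w = cls w" using someI[of "\<lambda>w'. w' \<in> W \<and> cls w' = cls w" w] w by simp
  then have "(?w, w) \<in> R" using cls_eq_iff w by blast
  then have "actw ?w nf1 = actw w nf1" using act_R nf1_NF by blast
  then show ?thesis by (simp add: lenH_def)
qed

lemma lenH_le: "w \<in> W \<Longrightarrow> lenH (cls w) \<le> tcount w"
  using lenH_cls len_actw[of w nf1] by (simp add: nf1_def)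

lemma carrH_tw: "h \<in> carrier H \<Longrightarrow> \<exists>x. isNF x \<and> h = cls (tw x) \<and> lenH h = length (snd x)"
proof -
  assume "h \<in> carrier H"
  then obtain w where w: "w \<in> W" "h = cls w" by (auto simp: carrierH)
  show ?thesis
    using w eval_nf lenH_cls actw_NF[OF nf1_NF w(1)] by (intro exI[of _ "actw w nf1"]) auto
qed

lemma lenH_mult:
  assumes a: "a \<in> carrier H" and b: "b \<in> carrier H"
  shows "lenH (a \<otimes>\<^bsub>H\<^esub> b) \<le> lenH a + lenH b"
proof -
  obtain xa where xa: "isNF xa" "a = cls (tw xa)" "lenH a = length (snd xa)"
    using carrH_tw[OF a] by blast
  obtain wb where wb: "wb \<in> W" "b = cls wb" using b by (auto simp: carrierH)
  have "a \<otimes>\<^bsub>H\<^esub> b = cls (tw xa @ wb)" using multH tw_W'[OF xa(1)] wb xa by simp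
  then have "lenH (a \<otimes>\<^bsub>H\<^esub> b) = length (snd (actw (tw xa) (actw wb nf1)))"
    using lenH_cls tw_W'[OF xa(1)] wb by (simp add: actw_app)
  also have "\<dots> \<le> tcount (tw xa) + length (snd (actw wb nf1))" by (rule len_actw)
  also have "\<dots> = lenH a + lenH b" using xa wb lenH_cls by (simp add: tcount_tw)
  finally show ?thesis .
qed

lemma lenH_inv:
  assumes a: "a \<in> carrier H"
  shows "lenH (inv\<^bsub>H\<^esub> a) \<le> lenH a"
proof -
  obtain xa where xa: "isNF xa" "a = cls (tw xa)" "lenH a = length (snd xa)"
    using carrH_tw[OF a] by blast
  have "inv\<^bsub>H\<^esub> a = cls (flipw (tw xa))" using invH tw_W'[OF xa(1)] xa by simp
  then show ?thesis using lenH_le[of "flipw (tw xa)"] tw_W'[OF xa(1)] xa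
    by (simp add: tcount_flipw tcount_tw)
qed

lemma lenH_inc: "g \<in> carrier G \<Longrightarrow> lenH (inc g) = 0"
  using lenH_le[of "[(Some g, False)]"] by (simp add: inc_def tcount_def)

definition pinch :: "bool \<Rightarrow> 'g \<Rightarrow> bool \<Rightarrow> bool" where
  "pinch e g e' = (e' = (\<not> e) \<and> g \<in> S e)"

fun red :: "(bool \<times> 'g) list \<Rightarrow> bool" where
  "red ((e, g) # (e', g') # L) = (\<not> pinch e g e' \<and> red ((e', g') # L))"
| "red _ = True"

lemma britton:
  assumes "red L" "L \<noteq> []" "g0 \<in> carrier G" "carrL L"
  shows "length (snd (actw (tw (g0, L)) nf1)) = length L
    \<and> snd (actw (tw (g0, L)) nf1) \<noteq> []
    \<and> fst (hd (snd (actw (tw (g0, L)) nf1))) = fst (hd L)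
    \<and> inv g0 \<otimes> fst (actw (tw (g0, L)) nf1) \<in> S (\<not> fst (hd L))"
  using assms
proof (induction L arbitrary: g0 rule: red.induct)
  case (1 e1 g1 e2 g2 L)
  let ?L2 = "(e2, g2) # L"
  have g1: "g1 \<in> carrier G" and L2c: "carrL ?L2" using 1 by (auto simp: carrL_def)
  have np: "\<not> pinch e1 g1 e2" and r2: "red ?L2" using 1 by auto
  define y where "y = actw (tw (g1, ?L2)) nf1"
  have IH: "length (snd y) = length ?L2 \<and> snd y \<noteq> [] \<and> fst (hd (snd y)) = e2
      \<and> inv g1 \<otimes> fst y \<in> S (\<not> e2)"
    using "1.IH"[OF r2 _ g1 L2c] by (simp add: y_def)
  have yNF: "isNF y" unfolding y_def using actw_NF[OF nf1_NF tw_W[OF g1 L2c]] .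
  obtain h1 M where ye: "y = (h1, M)" by (cases y)
  have h1: "h1 \<in> carrier G" using yNF ye by (simp add: isNF_def)
  have eq: "actw (tw (g0, (e1, g1) # ?L2)) nf1 = actg g0 (actt e1 y)"
    by (simp add: tw_def y_def)
  define c where "c = rep (S e1) h1"
  define s where "s = h1 \<otimes> inv c"
  have sS: "s \<in> S e1" using s_in[OF h1] by (simp add: s_def c_def)
  have nc: "\<not> (c = \<one> \<and> M \<noteq> [] \<and> fst (hd M) = (\<not> e1))"
  proof
    assume a: "c = \<one> \<and> M \<noteq> [] \<and> fst (hd M) = (\<not> e1)"
    then have h1S: "h1 \<in> S e1" using rep_one_iff[OF sgS h1] by (simp add: c_def)
    have e2: "e2 = (\<not> e1)" using a IH ye by simp
    have d: "inv g1 \<otimes> h1 \<in> S e1" using IH ye e2 by simp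
    have "g1 = h1 \<otimes> inv (inv g1 \<otimes> h1)" using g1 h1 by (simp add: inv_mult_group m_assoc[symmetric])
    then have "g1 \<in> S e1"
      using subgroup.m_closed[OF sgS h1S subgroup.m_inv_closed[OF sgS d]] by simp
    then show False using np e2 by (simp add: pinch_def)
  qed
  have at: "actt e1 y = (psi e1 s, (e1, c) # M)"
    by (simp only: ye actt_simp[OF c_def s_def] if_not_P[OF nc])
  have "inv g0 \<otimes> (g0 \<otimes> psi e1 s) = psi e1 s" using "1.prems"(3) psi_carr[OF sS]
    by (simp add: m_assoc[symmetric])
  then show ?case using IH ye eq at psi_in[OF sS] by (simp add: actg_def)
next
  case ("2_2" p)
  obtain e1 g1 where p: "p = (e1, g1)" by (cases p)
  have g1: "g1 \<in> carrier G" using "2_2" p by (auto simp: carrL_def)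
  define c where "c = rep (S e1) g1"
  define s where "s = g1 \<otimes> inv c"
  have sS: "s \<in> S e1" using s_in[OF g1] by (simp add: s_def c_def)
  have eq: "actw (tw (g0, [(e1, g1)])) nf1 = actg g0 (actt e1 (g1, []))"
    using g1 by (simp add: tw_def nf1_def actg_def)
  have at: "actt e1 (g1, []) = (psi e1 s, [(e1, c)])"
    by (simp add: actt_simp[OF c_def s_def])
  have "inv g0 \<otimes> (g0 \<otimes> psi e1 s) = psi e1 s" using "2_2.prems"(3) psi_carr[OF sS]
    by (simp add: m_assoc[symmetric])
  then show ?case using eq at psi_in[OF sS] p by (simp add: actg_def)
qed simp

lemma lenH_red:
  assumes "red L" "g0 \<in> carrier G" "carrL L"
  shows "lenH (cls (tw (g0, L))) = length L"
proof (cases "L = []")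
  case True
  then show ?thesis using assms lenH_le[of "tw (g0, L)"] tw_W by (simp add: tcount_tw)
next
  case False
  then show ?thesis using britton[OF assms(1) False assms(2,3)] lenH_cls tw_W assms by simp
qed

lemma nf_red: "nfL L \<Longrightarrow> red L"
proof (induction L rule: red.induct)
  case (1 e g e' g' L)
  have g: "g \<in> carrier G" "rep (S e) g = g" and r: "e' \<noteq> e \<longrightarrow> g \<noteq> \<one>" using 1 by auto
  have "\<not> pinch e g e'"
    using rep_one_iff[OF sgS g(1), of e] g(2) r by (auto simp: pinch_def)
  then show ?case using 1 by simp
qed simp_all

end

context hnnctx
begin

definition pinchp :: "bool \<times> 'g \<Rightarrow> bool \<times> 'g \<Rightarrow> bool" where
  "pinchp p q = pinch (fst p) (snd p) (fst q)"

lemma red_app: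
  "red L1 \<Longrightarrow> red L2 \<Longrightarrow> (L1 \<noteq> [] \<Longrightarrow> L2 \<noteq> [] \<Longrightarrow> \<not> pinchp (last L1) (hd L2)) \<Longrightarrow> red (L1 @ L2)"
proof (induction L1 rule: red.induct)
  case (1 e g e' g' L)
  then show ?case by auto
next
  case "2_1" then show ?case by simp
next
  case ("2_2" p)
  then show ?case by (cases p; cases L2) (auto simp: pinchp_def)
qed

lemma red_last: "red (L1 @ [p]) \<Longrightarrow> fst q = fst p \<Longrightarrow> red (L1 @ [q])"
proof (induction L1 rule: red.induct)
  case (1 e g e' g' L)
  then show ?case by auto
next
  case "2_1" then show ?case by simp
next
  case ("2_2" r)
  then show ?case by (cases r; cases p; cases q) auto
qed

lemma carrL_app[simp]: "carrL (L1 @ L2) = (carrL L1 \<and> carrL L2)"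
  by (auto simp: carrL_def)
lemma carrL_Cons[simp]: "carrL (p # L) = (snd p \<in> carrier G \<and> carrL L)"
  by (auto simp: carrL_def)
lemma carrL_Nil[simp]: "carrL []"
  by (auto simp: carrL_def)

lemma carrL_pow: "carrL L \<Longrightarrow> carrL (concat (replicate N L))"
  by (induction N) auto

lemma red_pow:
  assumes r: "red L" and ne: "L \<noteq> []" and cyc: "\<not> pinchp (last L) (hd L)"
  shows "red (concat (replicate N L))"
proof (induction N)
  case 0 then show ?case by simp
next
  case (Suc N)
  have h: "concat (replicate N L) \<noteq> [] \<Longrightarrow> hd (concat (replicate N L)) = hd L"
    using ne by (cases N) auto
  show ?case using red_app[OF r Suc.IH] h cyc by simp
qed

lemma cls_Nil: "cls [] = \<one>\<^bsub>H\<^esub>" by (simp add: oneH)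

lemma cls_sylls_app: "carrL L1 \<Longrightarrow> carrL L2 \<Longrightarrow>
    cls (sylls (L1 @ L2)) = cls (sylls L1) \<otimes>\<^bsub>H\<^esub> cls (sylls L2)"
  by (simp add: sylls_app cls_app sylls_W)

lemma cls_sylls_single: "g \<in> carrier G \<Longrightarrow> cls (sylls [(e, g)]) = tt e \<otimes>\<^bsub>H\<^esub> inc g"
  using cls_sylls_Cons[of g "[]" e] by (simp add: cls_Nil sylls.simps(1) del: sylls.simps(2))

lemma Hc1[simp]: "x \<in> carrier H \<Longrightarrow> y \<in> carrier H \<Longrightarrow> x \<otimes>\<^bsub>H\<^esub> (inv\<^bsub>H\<^esub> x \<otimes>\<^bsub>H\<^esub> y) = y"
  by (simp add: Hg.m_assoc[symmetric])
lemma Hc2[simp]: "x \<in> carrier H \<Longrightarrow> y \<in> carrier H \<Longrightarrow> inv\<^bsub>H\<^esub> x \<otimes>\<^bsub>H\<^esub> (x \<otimes>\<^bsub>H\<^esub> y) = y"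
  by (simp add: Hg.m_assoc[symmetric])

lemma conj_pow:
  assumes a: "a \<in> carrier H" and z: "z \<in> carrier H"
  shows "(inv\<^bsub>H\<^esub> z \<otimes>\<^bsub>H\<^esub> a \<otimes>\<^bsub>H\<^esub> z) [^]\<^bsub>H\<^esub> (n::nat) = inv\<^bsub>H\<^esub> z \<otimes>\<^bsub>H\<^esub> a [^]\<^bsub>H\<^esub> n \<otimes>\<^bsub>H\<^esub> z"
proof (induction n)
  case 0 then show ?case using z by simp
next
  case (Suc n)
  have "(inv\<^bsub>H\<^esub> z \<otimes>\<^bsub>H\<^esub> a \<otimes>\<^bsub>H\<^esub> z) [^]\<^bsub>H\<^esub> Suc n
      = inv\<^bsub>H\<^esub> z \<otimes>\<^bsub>H\<^esub> a [^]\<^bsub>H\<^esub> n \<otimes>\<^bsub>H\<^esub> z \<otimes>\<^bsub>H\<^esub> (inv\<^bsub>H\<^esub> z \<otimes>\<^bsub>H\<^esub> a \<otimes>\<^bsub>H\<^esub> z)"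
    using Suc by simp
  also have "\<dots> = inv\<^bsub>H\<^esub> z \<otimes>\<^bsub>H\<^esub> (a [^]\<^bsub>H\<^esub> n \<otimes>\<^bsub>H\<^esub> a) \<otimes>\<^bsub>H\<^esub> z"
    using a z by (simp add: Hg.m_assoc)
  finally show ?case by simp
qed

lemma inc_pow: "g \<in> carrier G \<Longrightarrow> inc (g [^] (n::nat)) = inc g [^]\<^bsub>H\<^esub> n"
  by (induction n) (simp_all add: inc_one inc_mult)

lemma hnn_inc_eq: "hnn_inc G A \<phi> g = inc g"
  by (simp add: hnn_inc_def inc_def cls_def)

end

context hnnctx
begin

lemma main:
  assumes "h \<in> carrier H" "0 < m" "z \<in> carrier H" "g \<in> carrier G"
    "h [^]\<^bsub>H\<^esub> (m::nat) = inv\<^bsub>H\<^esub> z \<otimes>\<^bsub>H\<^esub> inc g \<otimes>\<^bsub>H\<^esub> z"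
  shows "\<exists>x\<in>carrier H. \<exists>g2\<in>carrier G. h = inv\<^bsub>H\<^esub> x \<otimes>\<^bsub>H\<^esub> inc g2 \<otimes>\<^bsub>H\<^esub> x"
  using assms
proof (induction "lenH h" arbitrary: h z g rule: less_induct)
  case less
  obtain x0 where x0: "isNF x0" "h = cls (tw x0)" "lenH h = length (snd x0)"
    using carrH_tw[OF less.prems(1)] by blast
  obtain g0 L where x0e: "x0 = (g0, L)" by (cases x0)
  have g0: "g0 \<in> carrier G" and cL: "carrL L" and nL: "nfL L" using isNF_D x0 x0e by auto
  have rL: "red L" using nf_red[OF nL] .
  have hL: "h = inc g0 \<otimes>\<^bsub>H\<^esub> cls (sylls L)" using x0 x0e cls_tw g0 cL by simp
  have lenL: "lenH h = length L" using x0 x0e by simp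
  have hc: "h \<in> carrier H" using less.prems(1) .
  have zc: "z \<in> carrier H" using less.prems(3) .
  have gc: "g \<in> carrier G" using less.prems(4) .
  show ?case
  proof (cases "L = []")
    case True
    then have "h = inc g0" using hL g0 by (simp add: cls_Nil)
    then have "h = inv\<^bsub>H\<^esub> \<one>\<^bsub>H\<^esub> \<otimes>\<^bsub>H\<^esub> inc g0 \<otimes>\<^bsub>H\<^esub> \<one>\<^bsub>H\<^esub>" using g0 by simp
    then show ?thesis using g0 Hg.one_closed by blast
  next
    case False
    obtain p L' where L1': "L = p # L'" using False by (cases L) auto
    obtain e1 g1 where p: "p = (e1, g1)" by (cases p)
    have L1: "L = (e1, g1) # L'" using L1' p by simp
    obtain en gn where Ln: "last L = (en, gn)" by (cases "last L")
    define BL where "BL = butlast L"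
    have Ldec: "L = BL @ [(en, gn)]" using append_butlast_last_id[OF False] Ln by (simp add: BL_def)
    have gn: "gn \<in> carrier G" and cBL: "carrL BL" using cL Ldec by (metis carrL_app carrL_Cons snd_conv)+
    have hB: "h = inc g0 \<otimes>\<^bsub>H\<^esub> cls (sylls BL) \<otimes>\<^bsub>H\<^esub> tt en \<otimes>\<^bsub>H\<^esub> inc gn"
      using hL Ldec cls_sylls_app[OF cBL, of "[(en, gn)]"] cls_sylls_single[OF gn, of en] gn cBL g0
      by (simp add: Hg.m_assoc del: sylls.simps)
    show ?thesis
    proof (cases "pinch en (gn \<otimes> g0) e1")
      case True
      then have e1: "e1 = (\<not> en)" and sS: "gn \<otimes> g0 \<in> S en" by (auto simp: pinch_def)
      have BLne: "BL \<noteq> []"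
      proof
        assume "BL = []"
        then have "L = [(en, gn)]" using Ldec by simp
        then show False using L1 e1 by simp
      qed
      define M where "M = tl BL"
      have BLe: "BL = (e1, g1) # M"
      proof -
        have "hd BL = hd L" using BLne Ldec by (metis hd_append2)
        then have "hd BL = (e1, g1)" using L1 by simp
        then show ?thesis using list.collapse[OF BLne] by (simp add: M_def)
      qed
      have g1: "g1 \<in> carrier G" and cM: "carrL M" using cBL BLe by auto
      define s where "s = gn \<otimes> g0"
      have sS': "s \<in> S en" using sS by (simp add: s_def)
      have sc: "s \<in> carrier G" using S_carr[OF sS'] .
      define y where "y = tt en \<otimes>\<^bsub>H\<^esub> inc gn"
      define h' where "h' = cls (tw (psi en s \<otimes> g1, M))"
      have psc: "psi en s \<in> carrier G" using psi_carr[OF sS'] .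
      have h'e: "h' = inc (psi en s) \<otimes>\<^bsub>H\<^esub> inc g1 \<otimes>\<^bsub>H\<^esub> cls (sylls M)"
        using psc g1 cM by (simp add: h'_def cls_tw inc_mult)
      have hM: "h = inc g0 \<otimes>\<^bsub>H\<^esub> tt e1 \<otimes>\<^bsub>H\<^esub> inc g1 \<otimes>\<^bsub>H\<^esub> cls (sylls M) \<otimes>\<^bsub>H\<^esub> tt en \<otimes>\<^bsub>H\<^esub> inc gn"
        using hB BLe cls_sylls_Cons[OF g1 cM, of e1] g1 cM g0 gn
        by (simp add: Hg.m_assoc del: sylls.simps)
      have yc: "y \<in> carrier H" using gn by (simp add: y_def)
      have h'c: "h' \<in> carrier H" using h'e psc g1 cM by simp
      have "y \<otimes>\<^bsub>H\<^esub> h = (tt en \<otimes>\<^bsub>H\<^esub> inc s \<otimes>\<^bsub>H\<^esub> tt (\<not> en)) \<otimes>\<^bsub>H\<^esub> (inc g1 \<otimes>\<^bsub>H\<^esub> cls (sylls M) \<otimes>\<^bsub>H\<^esub> y)"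
        using hM e1 gn g0 g1 cM by (simp add: y_def s_def inc_mult Hg.m_assoc)
      also have "\<dots> = inc (psi en s) \<otimes>\<^bsub>H\<^esub> (inc g1 \<otimes>\<^bsub>H\<^esub> cls (sylls M) \<otimes>\<^bsub>H\<^esub> y)"
        using pinchH[OF sS'] by simp
      also have "\<dots> = h' \<otimes>\<^bsub>H\<^esub> y" using psc g1 cM yc by (simp add: h'e Hg.m_assoc)
      finally have yh: "y \<otimes>\<^bsub>H\<^esub> h = h' \<otimes>\<^bsub>H\<^esub> y" .
      have h'def: "h' = inv\<^bsub>H\<^esub> (inv\<^bsub>H\<^esub> y) \<otimes>\<^bsub>H\<^esub> h \<otimes>\<^bsub>H\<^esub> inv\<^bsub>H\<^esub> y"
      proof -
        have "h' = h' \<otimes>\<^bsub>H\<^esub> y \<otimes>\<^bsub>H\<^esub> inv\<^bsub>H\<^esub> y" using h'c yc by (simp add: Hg.m_assoc)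
        also have "\<dots> = y \<otimes>\<^bsub>H\<^esub> h \<otimes>\<^bsub>H\<^esub> inv\<^bsub>H\<^esub> y" using yh by simp
        finally show ?thesis using yc by simp
      qed
      have lenh': "lenH h' < lenH h"
      proof -
        have "lenH h' \<le> length M"
          using lenH_le[OF tw_W[of "psi en s \<otimes> g1" M]] psc g1 cM
          by (simp add: h'_def tcount_tw)
        moreover have "length L = Suc (Suc (length M))" using Ldec BLe by simp
        ultimately show ?thesis using lenL by simp
      qed
      have pow: "h' [^]\<^bsub>H\<^esub> m = inv\<^bsub>H\<^esub> (z \<otimes>\<^bsub>H\<^esub> inv\<^bsub>H\<^esub> y) \<otimes>\<^bsub>H\<^esub> inc g \<otimes>\<^bsub>H\<^esub> (z \<otimes>\<^bsub>H\<^esub> inv\<^bsub>H\<^esub> y)"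
      proof -
        have "h' [^]\<^bsub>H\<^esub> m = inv\<^bsub>H\<^esub> (inv\<^bsub>H\<^esub> y) \<otimes>\<^bsub>H\<^esub> h [^]\<^bsub>H\<^esub> m \<otimes>\<^bsub>H\<^esub> inv\<^bsub>H\<^esub> y"
          unfolding h'def using conj_pow[OF hc, of "inv\<^bsub>H\<^esub> y" m] yc by simp
        also have "\<dots> = inv\<^bsub>H\<^esub> (z \<otimes>\<^bsub>H\<^esub> inv\<^bsub>H\<^esub> y) \<otimes>\<^bsub>H\<^esub> inc g \<otimes>\<^bsub>H\<^esub> (z \<otimes>\<^bsub>H\<^esub> inv\<^bsub>H\<^esub> y)"
          using less.prems(5) yc zc gc by (simp add: Hg.inv_mult_group Hg.m_assoc)
        finally show ?thesis .
      qed
      obtain x' g2 where x': "x' \<in> carrier H" "g2 \<in> carrier G" "h' = inv\<^bsub>H\<^esub> x' \<otimes>\<^bsub>H\<^esub> inc g2 \<otimes>\<^bsub>H\<^esub> x'"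
        using less.hyps[OF lenh' h'c less.prems(2) _ gc pow] zc yc by blast
      have "h = inv\<^bsub>H\<^esub> y \<otimes>\<^bsub>H\<^esub> h' \<otimes>\<^bsub>H\<^esub> y"
        using yh hc yc h'c by (simp add: Hg.m_assoc yh[symmetric])
      also have "\<dots> = inv\<^bsub>H\<^esub> (x' \<otimes>\<^bsub>H\<^esub> y) \<otimes>\<^bsub>H\<^esub> inc g2 \<otimes>\<^bsub>H\<^esub> (x' \<otimes>\<^bsub>H\<^esub> y)"
        using x' yc by (simp add: Hg.inv_mult_group Hg.m_assoc)
      finally show ?thesis using x' yc by blast
    next
      case False
      define Lx where "Lx = BL @ [(en, gn \<otimes> g0)]"
      have cLx: "carrL Lx" using cBL gn g0 by (simp add: Lx_def)
      have rLx: "red Lx" using red_last[of BL "(en, gn)" "(en, gn \<otimes> g0)"] rL Ldec by (simp add: Lx_def)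
      have neLx: "Lx \<noteq> []" by (simp add: Lx_def)
      have hdLx: "fst (hd Lx) = e1"
      proof (cases "BL = []")
        case True
        then show ?thesis using Ldec L1 by (simp add: Lx_def)
      next
        case False
        then have "hd Lx = hd L" using Ldec by (simp add: Lx_def hd_append)
        then show ?thesis using L1 by simp
      qed
      have cyc: "\<not> pinchp (last Lx) (hd Lx)"
        using \<open>\<not> pinch en (gn \<otimes> g0) e1\<close> hdLx by (simp add: pinchp_def Lx_def)
      define h0 where "h0 = cls (sylls Lx)"
      have gg: "gn \<otimes> g0 \<in> carrier G" using gn g0 by simp
      have h0e: "h0 = inv\<^bsub>H\<^esub> (inc g0) \<otimes>\<^bsub>H\<^esub> h \<otimes>\<^bsub>H\<^esub> inc g0"
      proof -
        have "h0 = cls (sylls BL) \<otimes>\<^bsub>H\<^esub> tt en \<otimes>\<^bsub>H\<^esub> inc gn \<otimes>\<^bsub>H\<^esub> inc g0"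
          using cls_sylls_app[OF cBL, of "[(en, gn \<otimes> g0)]"] cls_sylls_single[OF gg, of en] gg cBL g0 gn
          by (simp add: h0_def Lx_def inc_mult Hg.m_assoc del: sylls.simps)
        then show ?thesis using hB cBL g0 gn by (simp add: Hg.m_assoc)
      qed
      have h0c: "h0 \<in> carrier H" using cLx by (simp add: h0_def)
      have powN: "h0 [^]\<^bsub>H\<^esub> N = cls (sylls (concat (replicate N Lx)))" for N :: nat
      proof (induction N)
        case 0 then show ?case by (simp add: cls_Nil)
      next
        case (Suc N)
        have "h0 [^]\<^bsub>H\<^esub> Suc N = h0 \<otimes>\<^bsub>H\<^esub> h0 [^]\<^bsub>H\<^esub> N" using Hg.nat_pow_Suc2[OF h0c] .
        also have "\<dots> = cls (sylls (Lx @ concat (replicate N Lx)))"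
          using Suc cls_sylls_app[OF cLx carrL_pow[OF cLx]] by (simp add: h0_def)
        finally show ?case by simp
      qed
      have lenN: "lenH (h0 [^]\<^bsub>H\<^esub> N) = N * length Lx" for N :: nat
      proof -
        have "cls (tw (\<one>, concat (replicate N Lx))) = h0 [^]\<^bsub>H\<^esub> N"
          using cls_tw[OF one_closed carrL_pow[OF cLx]] powN carrL_pow[OF cLx] by (simp add: inc_one)
        moreover have "lenH (cls (tw (\<one>, concat (replicate N Lx)))) = length (concat (replicate N Lx))"
          by (rule lenH_red[OF red_pow[OF rLx neLx cyc] one_closed carrL_pow[OF cLx]])
        ultimately show ?thesis by (simp add: length_concat sum_list_replicate)
      qed
      define z' where "z' = z \<otimes>\<^bsub>H\<^esub> inc g0"
      have z'c: "z' \<in> carrier H" using zc g0 by (simp add: z'_def)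
      have h0m: "h0 [^]\<^bsub>H\<^esub> m = inv\<^bsub>H\<^esub> z' \<otimes>\<^bsub>H\<^esub> inc g \<otimes>\<^bsub>H\<^esub> z'"
      proof -
        have "h0 [^]\<^bsub>H\<^esub> m = inv\<^bsub>H\<^esub> (inc g0) \<otimes>\<^bsub>H\<^esub> h [^]\<^bsub>H\<^esub> m \<otimes>\<^bsub>H\<^esub> inc g0"
          unfolding h0e using conj_pow[OF hc, of "inc g0" m] g0 by simp
        then show ?thesis using less.prems(5) zc g0 gc by (simp add: z'_def Hg.inv_mult_group Hg.m_assoc)
      qed
      define j where "j = 2 * lenH z' + 1"
      have gj: "g [^] j \<in> carrier G" using gc by simp
      have "h0 [^]\<^bsub>H\<^esub> (m * j) = (h0 [^]\<^bsub>H\<^esub> m) [^]\<^bsub>H\<^esub> j" using Hg.nat_pow_pow[OF h0c] by simp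
      also have "\<dots> = inv\<^bsub>H\<^esub> z' \<otimes>\<^bsub>H\<^esub> inc g [^]\<^bsub>H\<^esub> j \<otimes>\<^bsub>H\<^esub> z'"
        using h0m conj_pow[of "inc g" z' j] gc z'c by simp
      also have "\<dots> = inv\<^bsub>H\<^esub> z' \<otimes>\<^bsub>H\<^esub> inc (g [^] j) \<otimes>\<^bsub>H\<^esub> z'" using inc_pow gc by simp
      finally have pj: "h0 [^]\<^bsub>H\<^esub> (m * j) = inv\<^bsub>H\<^esub> z' \<otimes>\<^bsub>H\<^esub> inc (g [^] j) \<otimes>\<^bsub>H\<^esub> z'" .
      have "lenH (h0 [^]\<^bsub>H\<^esub> (m * j)) \<le> lenH (inv\<^bsub>H\<^esub> z' \<otimes>\<^bsub>H\<^esub> inc (g [^] j)) + lenH z'"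
        unfolding pj using lenH_mult gj z'c by simp
      also have "\<dots> \<le> lenH (inv\<^bsub>H\<^esub> z') + lenH (inc (g [^] j)) + lenH z'"
        using lenH_mult[of "inv\<^bsub>H\<^esub> z'" "inc (g [^] j)"] gj z'c by simp
      also have "\<dots> \<le> 2 * lenH z'" using lenH_inv[OF z'c] lenH_inc[OF gj] by simp
      finally have le: "lenH (h0 [^]\<^bsub>H\<^esub> (m * j)) \<le> 2 * lenH z'" .
      have "m * j * length Lx \<ge> j"
      proof -
        have "length Lx \<ge> 1" using neLx by (cases Lx) auto
        moreover have "m \<ge> 1" using less.prems(2) by simp
        ultimately have "m * length Lx \<ge> 1" by simp
        then have "j * (m * length Lx) \<ge> j * 1" by (rule mult_le_mono2)
        then show ?thesis by (simp add: mult.commute mult.left_commute)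
      qed
      then show ?thesis using le lenN[of "m * j"] by (simp add: j_def)
    qed
  qed
qed

end

theorem corollary3p4:
  fixes G :: "('g, 'b) monoid_scheme" and A B :: "'g set" and \<phi> :: "'g \<Rightarrow> 'g" and g1 :: 'g
  assumes "group G" and "subgroup A G" and "subgroup B G"
    and "\<phi> \<in> iso (G\<lparr>carrier := A\<rparr>) (G\<lparr>carrier := B\<rparr>)"
    and "g1 \<in> carrier G"
    and "\<not> proper_power G g1"
  shows "proper_power (hnn_ext G A \<phi>) (hnn_inc G A \<phi> g1) \<longleftrightarrow>
    (\<exists>k::int. k \<ge> 2 \<and> (\<exists>g2\<in>carrier G. \<exists>x\<in>carrier (hnn_ext G A \<phi>).
       hnn_inc G A \<phi> g1 =
         inv\<^bsub>hnn_ext G A \<phi>\<^esub> x \<otimes>\<^bsub>hnn_ext G A \<phi>\<^esub> hnn_inc G A \<phi> (g2 [^]\<^bsub>G\<^esub> k)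
           \<otimes>\<^bsub>hnn_ext G A \<phi>\<^esub> x))"
proof -
  interpret hnnctx G A B \<phi>
    using assms by (simp add: hnnctx_def hnnctx_axioms_def)
  have g1: "g1 \<in> carrier G" by (rule assms(5))
  show ?thesis
    unfolding proper_power_def hnn_inc_eq
  proof
    assume "\<exists>h\<in>carrier H. \<exists>k::int. k \<ge> 2 \<and> inc g1 = h [^]\<^bsub>H\<^esub> k"
    then obtain h and k :: int where h: "h \<in> carrier H" and k: "k \<ge> 2" and e: "inc g1 = h [^]\<^bsub>H\<^esub> k"
      by (elim bexE exE conjE)
    define n where "n = nat k"
    have kn: "k = int n" using k by (simp add: n_def)
    have n0: "0 < n" using k by (simp add: n_def)
    have "h [^]\<^bsub>H\<^esub> n = inv\<^bsub>H\<^esub> \<one>\<^bsub>H\<^esub> \<otimes>\<^bsub>H\<^esub> inc g1 \<otimes>\<^bsub>H\<^esub> \<one>\<^bsub>H\<^esub>"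
      using e g1 h by (simp add: kn int_pow_int)
    then obtain x g2 where x: "x \<in> carrier H" "g2 \<in> carrier G" "h = inv\<^bsub>H\<^esub> x \<otimes>\<^bsub>H\<^esub> inc g2 \<otimes>\<^bsub>H\<^esub> x"
      using main[OF h n0 Hg.one_closed g1] by blast
    have "inc g1 = inv\<^bsub>H\<^esub> x \<otimes>\<^bsub>H\<^esub> inc g2 [^]\<^bsub>H\<^esub> n \<otimes>\<^bsub>H\<^esub> x"
      using e x conj_pow[of "inc g2" x n] by (simp add: kn int_pow_int)
    also have "\<dots> = inv\<^bsub>H\<^esub> x \<otimes>\<^bsub>H\<^esub> inc (g2 [^]\<^bsub>G\<^esub> k) \<otimes>\<^bsub>H\<^esub> x"
      using inc_pow[of g2 n] x by (simp add: kn int_pow_int)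
    finally show "\<exists>k::int. k \<ge> 2 \<and> (\<exists>g2\<in>carrier G. \<exists>x\<in>carrier H.
        inc g1 = inv\<^bsub>H\<^esub> x \<otimes>\<^bsub>H\<^esub> inc (g2 [^]\<^bsub>G\<^esub> k) \<otimes>\<^bsub>H\<^esub> x)"
      using k x by (intro exI[of _ k] conjI bexI[of _ g2] bexI[of _ x])
  next
    assume "\<exists>k::int. k \<ge> 2 \<and> (\<exists>g2\<in>carrier G. \<exists>x\<in>carrier H.
        inc g1 = inv\<^bsub>H\<^esub> x \<otimes>\<^bsub>H\<^esub> inc (g2 [^]\<^bsub>G\<^esub> k) \<otimes>\<^bsub>H\<^esub> x)"
    then obtain k :: int and g2 x where k: "k \<ge> 2" and x: "g2 \<in> carrier G" "x \<in> carrier H"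
      and e: "inc g1 = inv\<^bsub>H\<^esub> x \<otimes>\<^bsub>H\<^esub> inc (g2 [^]\<^bsub>G\<^esub> k) \<otimes>\<^bsub>H\<^esub> x" by (elim bexE exE conjE)
    define n where "n = nat k"
    have kn: "k = int n" using k by (simp add: n_def)
    define h where "h = inv\<^bsub>H\<^esub> x \<otimes>\<^bsub>H\<^esub> inc g2 \<otimes>\<^bsub>H\<^esub> x"
    have hc: "h \<in> carrier H" using x by (simp add: h_def)
    have "h [^]\<^bsub>H\<^esub> k = inv\<^bsub>H\<^esub> x \<otimes>\<^bsub>H\<^esub> inc g2 [^]\<^bsub>H\<^esub> n \<otimes>\<^bsub>H\<^esub> x"
      using conj_pow[of "inc g2" x n] x by (simp add: h_def kn int_pow_int)
    also have "\<dots> = inc g1" using e inc_pow[of g2 n] x by (simp add: kn int_pow_int)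
    finally show "\<exists>h\<in>carrier H. \<exists>k::int. k \<ge> 2 \<and> inc g1 = h [^]\<^bsub>H\<^esub> k"
      using hc k by (intro bexI[of _ h] exI[of _ k] conjI) simp_all
  qed
qed

end
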